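(* Let $\varphi_{-(n+2)}^{l}:=\sqrt{\tfrac{2n+1}{2n+3}}\,\mathcal{K}(\varphi_{n}^{l})$ for $n\in\mathbb{N}_0$, $l=0,\ldots,n$. Then: (i) for all $n\in\mathbb{N}_0$ and $l=0,\ldots,n$, $$\partial_{0}\,\varphi_{-(n+2)}^{l}=-\sqrt{\frac{(2n+1)(n-l+1)(n+l+2)}{2n+3}}\;\varphi_{-(n+3)}^{l};$$ (ii) for all $n\in\mathbb{N}$ and $l=0,\ldots,n-1$, the function $$\mathcal{P}\varphi_{-(n+2)}^{l}:=-\sqrt{\frac{2n+1}{(2n-1)(n-l)(n+l+1)}}\;\varphi_{-(n+1)}^{l}$$ is monogenic in $\mathbb{R}^3\setminus\{0\}$ and satisfies $\partial_{0}\big[\mathcal{P}\varphi_{-(n+2)}^{l}\big]=\varphi_{-(n+2)}^{l}$.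
   Context: $\mathbb{H}$: real quaternions with basis $\mathbf{e}_0=1,\mathbf{e}_1,\mathbf{e}_2,\mathbf{e}_3$, $\mathbf{e}_i\mathbf{e}_j+\mathbf{e}_j\mathbf{e}_i=-2\delta_{ij}$ ($i,j=1,2,3$), $\mathbf{e}_1\mathbf{e}_2=\mathbf{e}_3$. A point $(x_0,x_1,x_2)\in\mathbb{R}^3$ is identified with $\mathbf{x}=x_0+x_1\mathbf{e}_1+x_2\mathbf{e}_2$, $\overline{\mathbf{x}}=x_0-x_1\mathbf{e}_1-x_2\mathbf{e}_2$. Operators act from the left: $\bar\partial=\partial_{x_0}+\mathbf{e}_1\partial_{x_1}+\mathbf{e}_2\partial_{x_2}$, $\partial=\partial_{x_0}-\mathbf{e}_1\partial_{x_1}-\mathbf{e}_2\partial_{x_2}$; $f$ is monogenic if $\bar\partial f=0$, and the hypercomplex derivative of a monogenic $f$ is $\partial_0 f:=\tfrac12\partial f$. Kelvin transformation: $\mathcal{K}(P)(\mathbf{x})=\frac{\overline{\mathbf{x}}}{|\mathbf{x}|^3}P\big(\frac{\overline{\mathbf{x}}}{|\mathbf{x}|^2}\big)$. Spherical coordinates: $x_0=r\cos\theta$, $x_1=r\sin\theta\cos\varphi$, $x_2=r\sin\theta\sin\varphi$. With Legendre polynomials $P_k$ and $P_k^m(t)=(1-t^2)^{m/2}\frac{d^m}{dt^m}P_k(t)$ ($P_k^m=0$ for $m>k$), put $\mathcal{A}^{m,n}(\theta)=\tfrac12\big(\sin^2\theta\,\tfrac{d}{dt}[P_{n+1}^m(t)]_{t=\cos\theta}+(n+1)\cos\theta\,P_{n+1}^m(\cos\theta)\big)$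 and, for $n\in\mathbb{N}_0$, $l=0,\ldots,n$, $$A_n^l(\mathbf{x})=\frac{2^{l+1}n!\,r^n}{(n+l+2)!}\Big[(n+l+2)\mathcal{A}^{l,n}(\theta)\big(\cos l\varphi-\sin l\varphi\,\mathbf{e}_3\big)+\mathcal{A}^{l+1,n}(\theta)\big(\cos((l+1)\varphi)\mathbf{e}_1+\sin((l+1)\varphi)\mathbf{e}_2\big)\Big],$$ and $\varphi_n^l:=\frac{1}{2^{l+1}n!}\sqrt{\frac{(2n+3)(n-l)!(n+l+1)!}{\pi}}\,A_n^l$ (homogeneous monogenic polynomials forming an orthonormal basis of the square-integrable monogenic functions on the open unit ball). *)

theory Defs
  imports "HOL-Analysis.Analysis" "HOL-Computational_Algebra.Polynomial"
begin

datatype quat = Quat (q0: real) (q1: real) (q2: real) (q3: real)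

definition qadd :: "quat \<Rightarrow> quat \<Rightarrow> quat" where
  "qadd a b = Quat (q0 a + q0 b) (q1 a + q1 b) (q2 a + q2 b) (q3 a + q3 b)"

definition qscale :: "real \<Rightarrow> quat \<Rightarrow> quat" where
  "qscale c a = Quat (c * q0 a) (c * q1 a) (c * q2 a) (c * q3 a)"

text \<open>Hamilton product: e_i e_j + e_j e_i = -2 delta_ij, e1 e2 = e3.\<close>
definition qmul :: "quat \<Rightarrow> quat \<Rightarrow> quat" where
  "qmul a b = Quat
     (q0 a * q0 b - q1 a * q1 b - q2 a * q2 b - q3 a * q3 b)
     (q0 a * q1 b + q1 a * q0 b + q2 a * q3 b - q3 a * q2 b)
     (q0 a * q2 b - q1 a * q3 b + q2 a * q0 b + q3 a * q1 b)
     (q0 a * q3 b + q1 a * q2 b - q2 a * q1 b + q3 a * q0 b)"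

definition qzero :: quat where "qzero = Quat 0 0 0 0"
definition qe1 :: quat where "qe1 = Quat 0 1 0 0"
definition qe2 :: quat where "qe2 = Quat 0 0 1 0"

type_synonym pt = "real \<times> real \<times> real"

definition pnorm :: "pt \<Rightarrow> real" where
  "pnorm x = sqrt ((fst x)\<^sup>2 + (fst (snd x))\<^sup>2 + (snd (snd x))\<^sup>2)"

definition pquat :: "pt \<Rightarrow> quat" where
  "pquat x = Quat (fst x) (fst (snd x)) (snd (snd x)) 0"

definition pconj_quat :: "pt \<Rightarrow> quat" where
  "pconj_quat x = Quat (fst x) (- fst (snd x)) (- snd (snd x)) 0"

text \<open>the point corresponding to the paravector conj(x) / |x|^2\<close>
definition kelvin_pt :: "pt \<Rightarrow> pt" where
  "kelvin_pt x = (fst x / (pnorm x)\<^sup>2, - fst (snd x) / (pnorm x)\<^sup>2, - snd (snd x) / (pnorm x)\<^sup>2)"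

definition unit_dir :: "nat \<Rightarrow> pt" where
  "unit_dir i = (if i = 0 then (1,0,0) else if i = 1 then (0,1,0) else (0,0,1))"

definition pdiff :: "nat \<Rightarrow> (pt \<Rightarrow> quat) \<Rightarrow> pt \<Rightarrow> quat" where
  "pdiff i f x = Quat
     (deriv (\<lambda>t. q0 (f (x + t *\<^sub>R unit_dir i))) 0)
     (deriv (\<lambda>t. q1 (f (x + t *\<^sub>R unit_dir i))) 0)
     (deriv (\<lambda>t. q2 (f (x + t *\<^sub>R unit_dir i))) 0)
     (deriv (\<lambda>t. q3 (f (x + t *\<^sub>R unit_dir i))) 0)"

definition Dbar :: "(pt \<Rightarrow> quat) \<Rightarrow> pt \<Rightarrow> quat" where
  "Dbar f x = qadd (pdiff 0 f x) (qadd (qmul qe1 (pdiff 1 f x)) (qmul qe2 (pdiff 2 f x)))"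

definition hderiv :: "(pt \<Rightarrow> quat) \<Rightarrow> pt \<Rightarrow> quat" where
  "hderiv f x = qscale (1/2) (qadd (pdiff 0 f x)
       (qadd (qscale (-1) (qmul qe1 (pdiff 1 f x))) (qscale (-1) (qmul qe2 (pdiff 2 f x)))))"

definition monogenic_on :: "pt set \<Rightarrow> (pt \<Rightarrow> quat) \<Rightarrow> bool" where
  "monogenic_on S f \<longleftrightarrow> open S \<and>
     (\<forall>x\<in>S. (\<lambda>p. q0 (f p)) differentiable (at x) \<and> (\<lambda>p. q1 (f p)) differentiable (at x)
          \<and> (\<lambda>p. q2 (f p)) differentiable (at x) \<and> (\<lambda>p. q3 (f p)) differentiable (at x)
          \<and> Dbar f x = qzero)"

definition kelvin :: "(pt \<Rightarrow> quat) \<Rightarrow> pt \<Rightarrow> quat" where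
  "kelvin P x = qmul (qscale (1 / (pnorm x)^3) (pconj_quat x)) (P (kelvin_pt x))"

fun legendre :: "nat \<Rightarrow> real poly" where
  "legendre 0 = 1"
| "legendre (Suc 0) = [:0, 1:]"
| "legendre (Suc (Suc n)) =
     smult (1 / real (n + 2))
       (smult (real (2 * n + 3)) ([:0, 1:] * legendre (Suc n)) - smult (real (n + 1)) (legendre n))"

definition assoc_legendre :: "nat \<Rightarrow> nat \<Rightarrow> real \<Rightarrow> real" where
  "assoc_legendre m k t = (sqrt (1 - t\<^sup>2)) ^ m * poly ((pderiv ^^ m) (legendre k)) t"

definition sph_r :: "pt \<Rightarrow> real" where "sph_r x = pnorm x"
definition sph_theta :: "pt \<Rightarrow> real" where "sph_theta x = arccos (fst x / pnorm x)"
definition sph_phi :: "pt \<Rightarrow> real" where "sph_phi x = Arg (Complex (fst (snd x)) (snd (snd x)))"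

definition calA :: "nat \<Rightarrow> nat \<Rightarrow> real \<Rightarrow> real" where
  "calA m n \<theta> = (1/2) * ((sin \<theta>)\<^sup>2 * deriv (\<lambda>t. assoc_legendre m (n + 1) t) (cos \<theta>)
                       + real (n + 1) * cos \<theta> * assoc_legendre m (n + 1) (cos \<theta>))"

definition A_poly :: "nat \<Rightarrow> nat \<Rightarrow> pt \<Rightarrow> quat" where
  "A_poly n l x =
     (let r = sph_r x; \<theta> = sph_theta x; \<phi> = sph_phi x;
          c = 2 ^ (l + 1) * fact n * r ^ n / fact (n + l + 2);
          a = real (n + l + 2) * calA l n \<theta>;
          b = calA (l + 1) n \<theta>
      in qscale c (Quat (a * cos (real l * \<phi>)) (b * cos (real (l + 1) * \<phi>))
                        (b * sin (real (l + 1) * \<phi>)) (- a * sin (real l * \<phi>))))"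

definition phi_basis :: "nat \<Rightarrow> nat \<Rightarrow> pt \<Rightarrow> quat" where
  "phi_basis n l = (\<lambda>x. qscale (1 / (2 ^ (l + 1) * fact n) *
      sqrt (real (2 * n + 3) * fact (n - l) * fact (n + l + 1) / pi)) (A_poly n l x))"

text \<open>phi_neg n l is the function written phi_{-(n+2)}^l in the paper\<close>
definition phi_neg :: "nat \<Rightarrow> nat \<Rightarrow> pt \<Rightarrow> quat" where
  "phi_neg n l = (\<lambda>x. qscale (sqrt (real (2 * n + 1) / real (2 * n + 3))) (kelvin (phi_basis n l) x))"

end

theory Submission
  imports Defs
begin


abbreviation "PX \<equiv> [:0, 1::real:]"

lemma leg_rec_t: "(real n + 2) * poly (legendre (Suc (Suc n))) t =
   (2*real n+3) * (t * poly (legendre (Suc n)) t) - (real n + 1) * poly (legendre n) t"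
proof -
  have "poly (legendre (Suc (Suc n))) t = (1 / (real n + 2)) * ((2*real n+3) * (t * poly (legendre (Suc n)) t) - (real n + 1) * poly (legendre n) t)"
    by (simp add: algebra_simps)
  thus ?thesis by (simp add: field_simps)
qed

lemma leg_rec_d: "(real n + 2) * poly (pderiv (legendre (Suc (Suc n)))) t =
   (2*real n+3) * (poly (legendre (Suc n)) t + t * poly (pderiv (legendre (Suc n))) t)
    - (real n + 1) * poly (pderiv (legendre n)) t"
proof -
  have "poly (pderiv (legendre (Suc (Suc n)))) t = (1 / (real n + 2)) * ((2*real n+3) * (poly (legendre (Suc n)) t + t * poly (pderiv (legendre (Suc n))) t)
    - (real n + 1) * poly (pderiv (legendre n)) t)"
    by (simp add: pderiv_smult pderiv_mult pderiv_diff pderiv_pCons algebra_simps)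
  thus ?thesis by (simp add: field_simps)
qed


lemma leg_ab: "pderiv (legendre (Suc N)) = PX * pderiv (legendre N) + smult (real N + 1) (legendre N)
   \<and> PX * pderiv (legendre (Suc N)) - pderiv (legendre N) = smult (real N + 1) (legendre (Suc N))"
proof (induction N)
  case 0
  then show ?case by (simp add: pderiv_pCons)
next
  case (Suc N)
  let ?P = "legendre"
  have a1: "\<And>t. poly (pderiv (?P (Suc (Suc N)))) t = t * poly (pderiv (?P (Suc N))) t + (real N + 2) * poly (?P (Suc N)) t"
  proof -
    fix t
    have e1: "(real N + 2) * poly (pderiv (?P (Suc (Suc N)))) t =
      (2*real N+3) * (poly (?P (Suc N)) t + t * poly (pderiv (?P (Suc N))) t) - (real N + 1) * poly (pderiv (?P N)) t"
      by (rule leg_rec_d)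
    have e2: "t * poly (pderiv (?P (Suc N))) t - poly (pderiv (?P N)) t = (real N + 1) * poly (?P (Suc N)) t"
      using arg_cong[OF conjunct2[OF Suc.IH], of "\<lambda>p. poly p t"] by simp
    have "(real N + 2) * (poly (pderiv (?P (Suc (Suc N)))) t - (t * poly (pderiv (?P (Suc N))) t + (real N + 2) * poly (?P (Suc N)) t)) = 0"
      using e1 e2 by algebra
    moreover have "real N + 2 \<noteq> 0" by simp
    ultimately show "?thesis t" by simp
  qed
  have b1: "\<And>t. t * poly (pderiv (?P (Suc (Suc N)))) t - poly (pderiv (?P (Suc N))) t = (real N + 2) * poly (?P (Suc (Suc N))) t"
  proof -
    fix t
    have e0: "(real N + 2) * poly (legendre (Suc (Suc N))) t =
      (2*real N+3) * (t * poly (legendre (Suc N)) t) - (real N + 1) * poly (legendre N) t" by (rule leg_rec_t)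
    have e2: "t * poly (pderiv (?P (Suc N))) t - poly (pderiv (?P N)) t = (real N + 1) * poly (?P (Suc N)) t"
      using arg_cong[OF conjunct2[OF Suc.IH], of "\<lambda>p. poly p t"] by simp
    have e3: "poly (pderiv (?P (Suc N))) t = t * poly (pderiv (?P N)) t + (real N + 1) * poly (?P N) t"
      using arg_cong[OF conjunct1[OF Suc.IH], of "\<lambda>p. poly p t"] by simp
    show "?thesis t" using e0 e2 e3 a1[of t] by algebra
  qed
  show ?case
  proof (intro conjI)
    show "pderiv (?P (Suc (Suc N))) = PX * pderiv (?P (Suc N)) + smult (real (Suc N) + 1) (?P (Suc N))"
      by (rule poly_ext) (simp del: legendre.simps add: a1 algebra_simps)
    show "PX * pderiv (?P (Suc (Suc N))) - pderiv (?P (Suc N)) = smult (real (Suc N) + 1) (?P (Suc (Suc N)))"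
      by (rule poly_ext) (simp del: legendre.simps add: algebra_simps, metis b1 add.commute diff_eq_eq distrib_right mult_2 add.assoc)
  qed
qed


abbreviation "LD m N \<equiv> (pderiv ^^ m) (legendre N)"
abbreviation "OMX \<equiv> [:1, 0, -1::real:]"

lemma LD_Suc: "LD (Suc m) N = pderiv (LD m N)" by simp

lemma leg_a_t: "poly (pderiv (legendre (Suc N))) t = t * poly (pderiv (legendre N)) t + (real N + 1) * poly (legendre N) t"
  using arg_cong[OF conjunct1[OF leg_ab[of N]], of "\<lambda>p. poly p t"] by (simp del: legendre.simps)

lemma leg_b_t: "t * poly (pderiv (legendre (Suc N))) t - poly (pderiv (legendre N)) t = (real N + 1) * poly (legendre (Suc N)) t"
  using arg_cong[OF conjunct2[OF leg_ab[of N]], of "\<lambda>p. poly p t"] by (simp del: legendre.simps)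

lemma leg_Dm: "LD (Suc m) (Suc N) = PX * LD (Suc m) N + smult (real N + 1 + real m) (LD m N)"
proof (induction m)
  case 0
  then show ?case using conjunct1[OF leg_ab[of N]] by simp
next
  case (Suc m)
  have "LD (Suc (Suc m)) (Suc N) = pderiv (LD (Suc m) (Suc N))" by simp
  also have "\<dots> = pderiv (PX * LD (Suc m) N + smult (real N + 1 + real m) (LD m N))" using Suc by simp
  also have "\<dots> = PX * LD (Suc (Suc m)) N + smult (real N + 1 + real (Suc m)) (LD (Suc m) N)"
    by (rule poly_ext) (simp del: legendre.simps add: pderiv_mult pderiv_pCons pderiv_add pderiv_smult algebra_simps)
  finally show ?case .
qed

lemma leg_I2_0: "OMX * pderiv (legendre N) = smult (real N + 1) (PX * legendre N - legendre (Suc N))"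
proof (rule poly_ext)
  fix t
  have a: "poly (pderiv (legendre (Suc N))) t = t * poly (pderiv (legendre N)) t + (real N + 1) * poly (legendre N) t"
    by (rule leg_a_t)
  have b: "t * poly (pderiv (legendre (Suc N))) t - poly (pderiv (legendre N)) t = (real N + 1) * poly (legendre (Suc N)) t"
    by (rule leg_b_t)
  show "poly (OMX * pderiv (legendre N)) t = poly (smult (real N + 1) (PX * legendre N - legendre (Suc N))) t"
    using a b by (simp del: legendre.simps) algebra
qed

lemma leg_ODE0: "OMX * LD 2 N - smult 2 (PX * LD 1 N) + smult (real N * (real N + 1)) (LD 0 N) = 0"
proof (rule poly_ext)
  fix t
  have d: "poly (pderiv (OMX * pderiv (legendre N))) t = poly (pderiv (smult (real N + 1) (PX * legendre N - legendre (Suc N)))) t"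
    using leg_I2_0 by simp
  have a: "poly (pderiv (legendre (Suc N))) t = t * poly (pderiv (legendre N)) t + (real N + 1) * poly (legendre N) t"
    by (rule leg_a_t)
  show "poly (OMX * LD 2 N - smult 2 (PX * LD 1 N) + smult (real N * (real N + 1)) (LD 0 N)) t = poly 0 t"
    using d a by (simp del: legendre.simps add: numeral_2_eq_2 pderiv_mult pderiv_pCons pderiv_diff pderiv_smult pderiv_add pderiv_minus) algebra
qed

lemma leg_ODE: "OMX * LD (Suc (Suc m)) N - smult (2 * (real m + 1)) (PX * LD (Suc m) N)
    + smult (real N * (real N + 1) - real m * (real m + 1)) (LD m N) = 0"
proof (induction m)
  case 0
  then show ?case using leg_ODE0[of N] by (simp add: numeral_2_eq_2)
next
  case (Suc m)
  show ?case
  proof (rule poly_ext)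
    fix t
    have d: "poly (pderiv (OMX * LD (Suc (Suc m)) N - smult (2 * (real m + 1)) (PX * LD (Suc m) N)
    + smult (real N * (real N + 1) - real m * (real m + 1)) (LD m N))) t = 0"
      using Suc by simp
    thus "poly (OMX * LD (Suc (Suc (Suc m))) N - smult (2 * (real (Suc m) + 1)) (PX * LD (Suc (Suc m)) N)
    + smult (real N * (real N + 1) - real (Suc m) * (real (Suc m) + 1)) (LD (Suc m) N)) t = poly 0 t"
      by (simp del: legendre.simps add: pderiv_mult pderiv_pCons pderiv_diff pderiv_add pderiv_smult pderiv_minus) algebra
  qed
qed

lemma leg_I2: "OMX * LD (Suc m) N - smult (real N + real m + 1) (PX * LD m N) = smult (real m - real N - 1) (LD m (Suc N))"
proof (induction m)
  case 0
  show ?case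
  proof (rule poly_ext)
    fix t
    have "poly (OMX * pderiv (legendre N)) t = poly (smult (real N + 1) (PX * legendre N - legendre (Suc N))) t"
      using leg_I2_0[of N] by simp
    thus "poly (OMX * LD (Suc 0) N - smult (real N + real 0 + 1) (PX * LD 0 N)) t = poly (smult (real 0 - real N - 1) (LD 0 (Suc N))) t"
      by (simp del: legendre.simps add: algebra_simps)
  qed
next
  case (Suc m)
  show ?case
  proof (rule poly_ext)
    fix t
    have d: "poly (pderiv (OMX * LD (Suc m) N - smult (real N + real m + 1) (PX * LD m N))) t
       = poly (pderiv (smult (real m - real N - 1) (LD m (Suc N)))) t"
      using Suc by simp
    have e: "poly (LD (Suc m) (Suc N)) t = poly (PX * LD (Suc m) N + smult (real N + 1 + real m) (LD m N)) t"
      using leg_Dm by simp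
    show "poly (OMX * LD (Suc (Suc m)) N - smult (real N + real (Suc m) + 1) (PX * LD (Suc m) N)) t
       = poly (smult (real (Suc m) - real N - 1) (LD (Suc m) (Suc N))) t"
      using d e by (simp del: legendre.simps add: pderiv_mult pderiv_pCons pderiv_diff pderiv_add pderiv_smult pderiv_minus) algebra
  qed
qed


definition qc :: "complex \<Rightarrow> complex \<Rightarrow> quat" where
  "qc F G = Quat (Re F) (Re G) (Im G) (- Im F)"

lemma qmul_qc: "qmul (qc F1 G1) (qc F2 G2) = qc (F1 * F2 - cnj G1 * G2) (cnj F1 * G2 + G1 * F2)"
  by (simp add: qmul_def qc_def algebra_simps)

lemma qscale_qc: "qscale c (qc F G) = qc (of_real c * F) (of_real c * G)"
  by (simp add: qscale_def qc_def)

lemma qc_eq_iff: "qc F G = qc F' G' \<longleftrightarrow> F = F' \<and> G = G'"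
  by (auto simp: qc_def complex_eq_iff)

lemma qzero_qc: "qzero = qc 0 0" by (simp add: qzero_def qc_def)

definition zz :: "pt \<Rightarrow> complex" where "zz x = Complex (fst (snd x)) (snd (snd x))"

lemma pconj_qc: "pconj_quat x = qc (of_real (fst x)) (- zz x)"
  by (simp add: pconj_quat_def qc_def zz_def)

lemma pnorm_sq: "(pnorm x)\<^sup>2 = (fst x)\<^sup>2 + (cmod (zz x))\<^sup>2"
  by (simp add: pnorm_def zz_def cmod_def)

lemma pnorm_pos: "x \<noteq> 0 \<Longrightarrow> pnorm x > 0"
proof -
  assume "x \<noteq> 0"
  then obtain a b c where x: "x = (a,b,c)" and "a \<noteq> 0 \<or> b \<noteq> 0 \<or> c \<noteq> 0" by (cases x) (auto simp: zero_prod_def)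
  hence "a\<^sup>2 + b\<^sup>2 + c\<^sup>2 > 0" by (smt (verit) zero_less_power2 zero_le_power2)
  thus ?thesis by (simp add: x pnorm_def)
qed

lemma cnj_mult_zz: "cnj (zz x) * zz x = of_real ((pnorm x)\<^sup>2 - (fst x)\<^sup>2)"
proof -
  have "(pnorm x)\<^sup>2 = (fst x)\<^sup>2 + (fst (snd x))\<^sup>2 + (snd (snd x))\<^sup>2"
    unfolding pnorm_def by (rule real_sqrt_pow2) simp
  thus ?thesis by (simp add: complex_eq_iff zz_def power2_eq_square)
qed

lemma abs_t_le: "\<bar>fst x / pnorm x\<bar> \<le> 1"
proof (cases "pnorm x = 0")
  case False
  moreover have "pnorm x \<ge> 0" by (simp add: pnorm_def)
  ultimately have p: "pnorm x > 0" by simp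
  have "\<bar>fst x\<bar> = sqrt ((fst x)\<^sup>2)" by simp
  also have "\<dots> \<le> pnorm x" unfolding pnorm_def by (rule real_sqrt_le_mono) simp
  finally have "\<bar>fst x\<bar> \<le> pnorm x" .
  moreover have "\<bar>fst x / pnorm x\<bar> = \<bar>fst x\<bar> / pnorm x" using p by simp
  ultimately show ?thesis using p by (simp add: divide_le_eq_1_pos)
qed simp

lemma s_eq: "x \<noteq> 0 \<Longrightarrow> sqrt (1 - (fst x / pnorm x)\<^sup>2) = cmod (zz x) / pnorm x"
proof -
  assume "x \<noteq> 0"
  hence p: "pnorm x > 0" by (rule pnorm_pos)
  have "1 - (fst x / pnorm x)\<^sup>2 = ((pnorm x)\<^sup>2 - (fst x)\<^sup>2) / (pnorm x)\<^sup>2"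
    using p by (simp add: field_simps power_divide)
  also have "\<dots> = (cmod (zz x) / pnorm x)\<^sup>2" using pnorm_sq[of x] by (simp add: power_divide)
  finally have "1 - (fst x / pnorm x)\<^sup>2 = (cmod (zz x) / pnorm x)\<^sup>2" .
  thus ?thesis using p by simp
qed

lemma cis_pow: "of_real (cmod w ^ m) * cis (real m * Arg w) = w ^ m"
proof (cases "w = 0")
  case True thus ?thesis by (cases m) (simp_all add: Arg_zero)
next
  case False
  have "w ^ m = (rcis (cmod w) (Arg w)) ^ m" by (simp add: rcis_cmod_Arg)
  also have "\<dots> = rcis (cmod w ^ m) (real m * Arg w)" by (rule DeMoivre2)
  finally show ?thesis by (simp add: rcis_def)
qed


definition Rp :: "nat \<Rightarrow> nat \<Rightarrow> real poly" where
  "Rp m N = smult (real N - real m) (PX * LD m N) + OMX * LD (Suc m) N"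

lemma assoc_legendre_DERIV:
  assumes "\<bar>t\<bar> < 1"
  shows "DERIV (assoc_legendre m N) t :> (real m * sqrt (1 - t\<^sup>2) ^ (m - 1) * (- t / sqrt (1 - t\<^sup>2))) * poly (LD m N) t
      + sqrt (1 - t\<^sup>2) ^ m * poly (LD (Suc m) N) t"
proof -
  have pos: "1 - t\<^sup>2 > 0" using assms by (simp add: abs_square_less_1)
  have f: "assoc_legendre m N = (\<lambda>t. sqrt (1 - t\<^sup>2) ^ m * poly (LD m N) t)"
    by (rule ext) (simp add: assoc_legendre_def)
  let ?s = "sqrt (1 - t\<^sup>2)"
  have d1: "DERIV (\<lambda>t. 1 - t\<^sup>2) t :> - (2 * t)"
    by (auto intro!: derivative_eq_intros)
  have d2: "DERIV (\<lambda>t. sqrt (1 - t\<^sup>2)) t :> inverse ?s / 2 * (- (2 * t))"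
    using DERIV_chain2[OF DERIV_real_sqrt[OF pos] d1] .
  have e: "inverse ?s / 2 * (- (2 * t)) = - t / ?s" by (simp add: field_simps)
  have d3: "DERIV (\<lambda>x. sqrt (1 - x\<^sup>2) ^ m) t :> real m * ?s ^ (m - 1) * (- t / ?s)"
    by (rule DERIV_cong[OF DERIV_power[OF d2, of m]]) (simp only: e, simp add: mult_ac)
  show ?thesis unfolding f
    using DERIV_mult[OF d3 poly_DERIV[of "LD m N" t]] by (simp add: divide_inverse mult_ac)
qed

lemma calA_eq:
  assumes "\<bar>t\<bar> \<le> 1"
  shows "calA m n (arccos t) = 1/2 * sqrt (1 - t\<^sup>2) ^ m * poly (Rp m (Suc n)) t"
proof -
  have t: "-1 \<le> t" "t \<le> 1" using assms by auto
  have c: "cos (arccos t) = t" using t by simp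
  have s: "(sin (arccos t))\<^sup>2 = 1 - t\<^sup>2" using sin_arccos[OF t] t by (simp add: abs_square_le_1)
  show ?thesis
  proof (cases "\<bar>t\<bar> < 1")
    case True
    let ?s = "sqrt (1 - t\<^sup>2)"
    have pos: "?s > 0" using True by (simp add: abs_square_less_1)
    have d: "deriv (\<lambda>t. assoc_legendre m (n + 1) t) t = (real m * ?s ^ (m - 1) * (- t / ?s)) * poly (LD m (Suc n)) t
      + ?s ^ m * poly (LD (Suc m) (Suc n)) t"
      using DERIV_imp_deriv[OF assoc_legendre_DERIV[OF True, of m "Suc n"]] by simp
    have ss: "1 - t\<^sup>2 = ?s\<^sup>2" using pos by simp
    have key: "(1 - t\<^sup>2) * (real m * ?s ^ (m - 1) * (- t / ?s)) = - real m * t * ?s ^ m"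
    proof (cases m)
      case 0 thus ?thesis by simp
    next
      case (Suc k)
      have gen: "\<And>s::real. s > 0 \<Longrightarrow> s\<^sup>2 * (real m * s ^ k * (- t / s)) = - real m * t * (s ^ k * s)"
      proof -
        fix s :: real assume "s > 0"
        have "s\<^sup>2 * (real m * s ^ k * (- t / s)) = (s * (- t / s)) * real m * (s ^ k * s)"
          by (simp only: power2_eq_square ac_simps)
        also have "s * (- t / s) = - t" using \<open>s > 0\<close> by simp
        finally show "s\<^sup>2 * (real m * s ^ k * (- t / s)) = - real m * t * (s ^ k * s)" by simp
      qed
      have "(1 - t\<^sup>2) * (real m * ?s ^ (m - 1) * (- t / ?s)) = ?s\<^sup>2 * (real m * ?s ^ k * (- t / ?s))"
        using Suc by (subst ss) simp
      also have "\<dots> = - real m * t * (?s ^ k * ?s)" by (rule gen[OF pos])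
      finally have "(1 - t\<^sup>2) * (real m * ?s ^ (m - 1) * (- t / ?s)) = - real m * t * (?s ^ k * ?s)" .
      thus ?thesis by (simp add: Suc mult.commute)
    qed
    define Q where "Q = poly (LD m (Suc n)) t"
    define Q' where "Q' = poly (LD (Suc m) (Suc n)) t"
    define A where "A = real m * ?s ^ (m - 1) * (- t / ?s)"
    have k2: "(1 - t\<^sup>2) * (A * Q + ?s ^ m * Q') = - real m * t * ?s ^ m * Q + (1 - t\<^sup>2) * ?s ^ m * Q'"
      unfolding distrib_left key[folded A_def, symmetric] by (simp only: mult.assoc mult.left_commute)
    have "calA m n (arccos t) = 1/2 * ((1 - t\<^sup>2) * (A * Q + ?s ^ m * Q') + real (n + 1) * t * (?s ^ m * Q))"
      unfolding calA_def c s d A_def Q_def Q'_def assoc_legendre_def by simp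
    also have "\<dots> = 1/2 * ?s ^ m * ((real (Suc n) - real m) * t * Q + (1 - t\<^sup>2) * Q')"
      unfolding k2 by (simp add: algebra_simps)
    also have "\<dots> = 1/2 * ?s ^ m * poly (Rp m (Suc n)) t"
      by (simp add: Rp_def Q_def Q'_def algebra_simps power2_eq_square)
    finally show ?thesis .
  next
    case False
    hence "\<bar>t\<bar> = 1" using assms by simp
    hence "t\<^sup>2 = 1" by (metis abs_square_eq_1)
    hence z: "1 - t\<^sup>2 = 0" and tt: "t * t = 1" by (simp_all add: power2_eq_square)
    have "calA m n (arccos t) = 1/2 * (real (n + 1) * t * (0 ^ m * poly (LD m (Suc n)) t))"
      unfolding calA_def c s assoc_legendre_def z by simp
    also have "\<dots> = 1/2 * sqrt (1 - t\<^sup>2) ^ m * poly (Rp m (Suc n)) t"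
      unfolding z by (cases m) (simp_all add: Rp_def tt)
    finally show ?thesis .
  qed
qed


lemma quat_cis: "qscale c (Quat (a * cos (real l * p)) (b * cos (real (l + 1) * p)) (b * sin (real (l + 1) * p)) (- a * sin (real l * p)))
   = qc (of_real (c * a) * cis (real l * p)) (of_real (c * b) * cis (real (l+1) * p))"
  by (simp add: qc_def qscale_def)

lemma cis_pow': "of_real (X * (cmod w / r) ^ m) * cis (real m * Arg w) = of_real (X / r ^ m) * w ^ m"
proof -
  have "of_real (X * (cmod w / r) ^ m) * cis (real m * Arg w) = of_real (X / r ^ m) * (of_real (cmod w ^ m) * cis (real m * Arg w))"
    by (simp add: power_divide)
  thus ?thesis by (simp only: cis_pow)
qed

lemma A_poly_eq:
  assumes "y \<noteq> 0"
  shows "A_poly n l y = qc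
     (of_real (2 ^ (l + 1) * fact n * pnorm y ^ n / fact (n + l + 2) * (real (n + l + 2) * (1/2 * poly (Rp l (Suc n)) (fst y / pnorm y))) / pnorm y ^ l) * zz y ^ l)
     (of_real (2 ^ (l + 1) * fact n * pnorm y ^ n / fact (n + l + 2) * (1/2 * poly (Rp (Suc l) (Suc n)) (fst y / pnorm y)) / pnorm y ^ (l+1)) * zz y ^ (l+1))"
proof -
  let ?t = "fst y / pnorm y"
  have th: "sph_theta y = arccos ?t" by (simp add: sph_theta_def)
  have ph: "sph_phi y = Arg (zz y)" by (simp add: sph_phi_def zz_def)
  have ca: "\<And>m. calA m n (sph_theta y) = 1/2 * (cmod (zz y) / pnorm y) ^ m * poly (Rp m (Suc n)) ?t"
    unfolding th using calA_eq[OF abs_t_le[of y]] s_eq[OF assms] by simp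
  show ?thesis
    unfolding A_poly_def Let_def sph_r_def ph ca quat_cis
    using cis_pow'[of "2 ^ (l + 1) * fact n * pnorm y ^ n / fact (n + l + 2) * (real (n + l + 2) * (1/2 * poly (Rp l (Suc n)) ?t))" "zz y" "pnorm y" l]
      cis_pow'[of "2 ^ (l + 1) * fact n * pnorm y ^ n / fact (n + l + 2) * (1/2 * poly (Rp (Suc l) (Suc n)) ?t)" "zz y" "pnorm y" "l+1"]
    by (simp add: mult_ac)
qed


lemma kelvin_pt_facts:
  assumes "x \<noteq> 0"
  shows "kelvin_pt x \<noteq> 0" "pnorm (kelvin_pt x) = 1 / pnorm x"
    "fst (kelvin_pt x) / pnorm (kelvin_pt x) = fst x / pnorm x"
    "zz (kelvin_pt x) = of_real (- 1 / (pnorm x)\<^sup>2) * zz x"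
proof -
  have p: "pnorm x > 0" using pnorm_pos[OF assms] .
  have sq: "(pnorm x)\<^sup>2 = (fst x)\<^sup>2 + (fst (snd x))\<^sup>2 + (snd (snd x))\<^sup>2"
    unfolding pnorm_def by (rule real_sqrt_pow2) simp
  have "(pnorm (kelvin_pt x))\<^sup>2 = ((fst x)\<^sup>2 + (fst (snd x))\<^sup>2 + (snd (snd x))\<^sup>2) / ((pnorm x)\<^sup>2)\<^sup>2"
    unfolding pnorm_def kelvin_pt_def by (simp add: power_divide add_divide_distrib power2_minus)
  also have "\<dots> = (1 / pnorm x)\<^sup>2" unfolding sq[symmetric] using p by (simp add: power2_eq_square)
  finally have "(pnorm (kelvin_pt x))\<^sup>2 = (1 / pnorm x)\<^sup>2" .
  moreover have "pnorm (kelvin_pt x) \<ge> 0" by (simp add: pnorm_def)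
  ultimately show n: "pnorm (kelvin_pt x) = 1 / pnorm x" using p
    by (metis power2_eq_imp_eq less_eq_real_def zero_less_divide_1_iff)
  show "kelvin_pt x \<noteq> 0" proof
    assume "kelvin_pt x = 0" hence "pnorm (kelvin_pt x) = 0" by (simp add: pnorm_def zero_prod_def)
    with n p show False by simp
  qed
  show "fst (kelvin_pt x) / pnorm (kelvin_pt x) = fst x / pnorm x"
    unfolding n by (simp add: kelvin_pt_def) (use p in \<open>simp add: field_simps power2_eq_square\<close>)
  show "zz (kelvin_pt x) = of_real (- 1 / (pnorm x)\<^sup>2) * zz x"
    by (simp add: kelvin_pt_def zz_def complex_eq_iff)
qed

lemma zz_pow_kel: "x \<noteq> 0 \<Longrightarrow> zz (kelvin_pt x) ^ m = of_real ((- 1) ^ m / pnorm x ^ (2 * m)) * zz x ^ m"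
proof -
  assume x: "x \<noteq> 0"
  have e: "pnorm x ^ (2 * m) = ((pnorm x)\<^sup>2) ^ m" by (simp add: power_mult)
  show ?thesis unfolding kelvin_pt_facts(4)[OF x] e
    by (simp only: power_mult_distrib of_real_power[symmetric] power_divide)
qed


definition gf :: "real \<Rightarrow> nat \<Rightarrow> real poly \<Rightarrow> nat \<Rightarrow> pt \<Rightarrow> complex" where
  "gf a k p m x = of_real (a / pnorm x ^ k * poly p (fst x / pnorm x)) * zz x ^ m"

definition Nn :: "nat \<Rightarrow> nat \<Rightarrow> real" where
  "Nn n l = 1 / (2 ^ (l + 1) * fact n) * sqrt (real (2 * n + 3) * fact (n - l) * fact (n + l + 1) / pi)"

definition Cc :: "nat \<Rightarrow> nat \<Rightarrow> real" where
  "Cc n l = 2 ^ (l + 1) * fact n / fact (n + l + 2)"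

definition kap :: "nat \<Rightarrow> nat \<Rightarrow> real" where
  "kap n l = sqrt (real (2 * n + 1) / real (2 * n + 3)) * Nn n l * (-1) ^ l * Cc n l / 2 * real (n + l + 2)"

lemma phi_basis_kel:
  assumes x: "x \<noteq> 0"
  shows "phi_basis n l (kelvin_pt x) = qc
    (of_real (Nn n l * (2 ^ (l + 1) * fact n * (1 / pnorm x) ^ n / fact (n + l + 2) * (real (n + l + 2) * (1/2 * poly (Rp l (Suc n)) (fst x / pnorm x))) / (1 / pnorm x) ^ l)
       * ((- 1) ^ l / pnorm x ^ (2 * l))) * zz x ^ l)
    (of_real (Nn n l * (2 ^ (l + 1) * fact n * (1 / pnorm x) ^ n / fact (n + l + 2) * (1/2 * poly (Rp (Suc l) (Suc n)) (fst x / pnorm x)) / (1 / pnorm x) ^ (l + 1))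
       * ((- 1) ^ (l + 1) / pnorm x ^ (2 * (l + 1)))) * zz x ^ (l + 1))"
proof -
  note kf = kelvin_pt_facts[OF x]
  have k3: "fst (kelvin_pt x) / (1 / pnorm x) = fst x / pnorm x" using kf(3) unfolding kf(2) .
  show ?thesis
    unfolding phi_basis_def A_poly_eq[OF kf(1)] qscale_qc kf(3) kf(2) zz_pow_kel[OF x] Nn_def[symmetric]
    by (simp only: of_real_mult mult.assoc k3)
qed


lemma Rp_rel:
  fixes t :: real
  shows "real (n+l+2) * t * poly (Rp l (Suc n)) t - (1 - t\<^sup>2) * poly (Rp (Suc l) (Suc n)) t
           = real (n+l+2) * (real (Suc n) - real l) * poly (LD l (Suc n)) t"
    and "t * poly (Rp (Suc l) (Suc n)) t + real (n+l+2) * poly (Rp l (Suc n)) t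
           = real (n+l+2) * poly (LD (Suc l) (Suc n)) t"
proof -
  have o: "poly (OMX * LD (Suc (Suc l)) (Suc n) - smult (2 * (real l + 1)) (PX * LD (Suc l) (Suc n))
    + smult (real (Suc n) * (real (Suc n) + 1) - real l * (real l + 1)) (LD l (Suc n))) t = 0"
    using leg_ODE[of l "Suc n"] by simp
  have o': "(1 - t\<^sup>2) * poly (LD (Suc (Suc l)) (Suc n)) t = 2 * (real l + 1) * t * poly (LD (Suc l) (Suc n)) t
     - (real (Suc n) * (real (Suc n) + 1) - real l * (real l + 1)) * poly (LD l (Suc n)) t"
    using o by (simp del: funpow.simps add: algebra_simps power2_eq_square)
  show "real (n+l+2) * t * poly (Rp l (Suc n)) t - (1 - t\<^sup>2) * poly (Rp (Suc l) (Suc n)) t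
           = real (n+l+2) * (real (Suc n) - real l) * poly (LD l (Suc n)) t"
    using o' unfolding Rp_def by (simp del: funpow.simps add: power2_eq_square) algebra
  show "t * poly (Rp (Suc l) (Suc n)) t + real (n+l+2) * poly (Rp l (Suc n)) t
           = real (n+l+2) * poly (LD (Suc l) (Suc n)) t"
    using o' unfolding Rp_def by (simp del: funpow.simps add: power2_eq_square) algebra
qed

lemma alg_F:
  fixes r t S Nn D k M Q Rl Rl1 :: real
  assumes r: "r > 0" and P1: "k * t * Rl - (1 - t\<^sup>2) * Rl1 = k * M * Q"
  shows "S * (r * t * (Nn * (D * (1 / r) ^ n * (k * (1/2 * Rl)) / (1 / r) ^ l) * ((- 1) ^ l / r ^ (2 * l))) / r ^ 3
          + Nn * (D * (1 / r) ^ n * (1/2 * Rl1) / (1 / r) ^ (l + 1)) * ((- 1) ^ (l + 1) / r ^ (2 * (l + 1))) * (r\<^sup>2 - (r * t)\<^sup>2) / r ^ 3)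
       = S * Nn * (- 1) ^ l * D / 2 * k * M / r ^ (n + l + 2) * Q"
proof -
  have u: "r ^ n > 0" and v: "r ^ l > 0" using r by simp_all
  have "S * (r * t * (Nn * (D * (1 / r) ^ n * (k * (1/2 * Rl)) / (1 / r) ^ l) * ((- 1) ^ l / r ^ (2 * l))) / r ^ 3
          + Nn * (D * (1 / r) ^ n * (1/2 * Rl1) / (1 / r) ^ (l + 1)) * ((- 1) ^ (l + 1) / r ^ (2 * (l + 1))) * (r\<^sup>2 - (r * t)\<^sup>2) / r ^ 3)
      = S * Nn * (- 1) ^ l * D / 2 / (r ^ n * r ^ l * r\<^sup>2) * (k * t * Rl - (1 - t\<^sup>2) * Rl1)"
    using r u v by (simp add: power_add power_mult power_one_over field_simps power2_eq_square power3_eq_cube)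
  also have "\<dots> = S * Nn * (- 1) ^ l * D / 2 * k * M / r ^ (n + l + 2) * Q"
    unfolding P1 using r u v by (simp add: power_add field_simps power2_eq_square)
  finally show ?thesis .
qed


lemma alg_G:
  fixes r t S Nn D k Q Rl Rl1 :: real
  assumes r: "r > 0" and P2: "t * Rl1 + k * Rl = k * Q"
  shows "S * (r * t * (Nn * (D * (1 / r) ^ n * (1/2 * Rl1) / (1 / r) ^ (l + 1)) * ((- 1) ^ (l + 1) / r ^ (2 * (l + 1)))) / r ^ 3
          - Nn * (D * (1 / r) ^ n * (k * (1/2 * Rl)) / (1 / r) ^ l) * ((- 1) ^ l / r ^ (2 * l)) / r ^ 3)
       = - (S * Nn * (- 1) ^ l * D / 2 * k) / r ^ (n + l + 3) * Q"
proof -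
  have u: "r ^ n > 0" and v: "r ^ l > 0" using r by simp_all
  have "S * (r * t * (Nn * (D * (1 / r) ^ n * (1/2 * Rl1) / (1 / r) ^ (l + 1)) * ((- 1) ^ (l + 1) / r ^ (2 * (l + 1)))) / r ^ 3
          - Nn * (D * (1 / r) ^ n * (k * (1/2 * Rl)) / (1 / r) ^ l) * ((- 1) ^ l / r ^ (2 * l)) / r ^ 3)
      = - (S * Nn * (- 1) ^ l * D / 2 / (r ^ n * r ^ l * r ^ 3)) * (t * Rl1 + k * Rl)"
    using r u v by (simp add: power_add power_mult power_one_over field_simps power2_eq_square power3_eq_cube)
  also have "\<dots> = - (S * Nn * (- 1) ^ l * D / 2 * k) / r ^ (n + l + 3) * Q"
    unfolding P2 using r u v by (simp add: power_add field_simps)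
  finally show ?thesis .
qed


lemma phi_neg_eq_pt:
  assumes x: "x \<noteq> 0"
  shows "phi_neg n l x = qc (gf (kap n l * (real (Suc n) - real l)) (n + l + 2) (LD l (Suc n)) l x)
                           (gf (- kap n l) (n + l + 3) (LD (Suc l) (Suc n)) (Suc l) x)"
proof -
  define r where "r = pnorm x"
  define t where "t = fst x / pnorm x"
  define z where "z = zz x"
  define S where "S = sqrt (real (2 * n + 1) / real (2 * n + 3))"
  define k where "k = real (n + l + 2)"
  define Rl where "Rl = poly (Rp l (Suc n)) t"
  define Rl1 where "Rl1 = poly (Rp (Suc l) (Suc n)) t"
  have r: "r > 0" using pnorm_pos[OF x] by (simp add: r_def)
 have tr: "fst x / r = t" by (simp add: r_def t_def)
  have x0: "fst x = r * t" using r by (simp add: r_def t_def)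
  have cc: "2 ^ (l + 1) * fact n * (1 / pnorm x) ^ n / fact (n + l + 2) = Cc n l * (1 / r) ^ n"
    by (simp add: Cc_def r_def)
  define a1 where "a1 = Nn n l * (Cc n l * (1 / r) ^ n * (k * (1/2 * Rl)) / (1 / r) ^ l) * ((- 1) ^ l / r ^ (2 * l))"
  define b1 where "b1 = Nn n l * (Cc n l * (1 / r) ^ n * (1/2 * Rl1) / (1 / r) ^ (l + 1)) * ((- 1) ^ (l + 1) / r ^ (2 * (l + 1)))"
  have pb: "phi_basis n l (kelvin_pt x) = qc (of_real a1 * z ^ l) (of_real b1 * z ^ (l + 1))"
    unfolding phi_basis_kel[OF x] cc a1_def b1_def
    by (simp only: r_def t_def z_def Rl_def Rl1_def k_def)
  have cz: "cnj z * z = of_real (r\<^sup>2 - (r * t)\<^sup>2)"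
    using cnj_mult_zz[of x] unfolding z_def[symmetric] r_def[symmetric] x0 .
  have pc: "qscale (1 / pnorm x ^ 3) (pconj_quat x) = qc (of_real (r * t / r ^ 3)) (- (of_real (1 / r ^ 3) * z))"
    unfolding pconj_qc qscale_qc by (simp add: x0 r_def z_def)
  have F: "qmul (qc (of_real (r * t / r ^ 3)) (- (of_real (1 / r ^ 3) * z))) (qc (of_real a1 * z ^ l) (of_real b1 * z ^ (l + 1)))
     = qc (of_real (r * t * a1 / r ^ 3 + b1 * (r\<^sup>2 - (r * t)\<^sup>2) / r ^ 3) * z ^ l)
          (of_real (r * t * b1 / r ^ 3 - a1 / r ^ 3) * z ^ Suc l)"
  proof -
    have e1: "cnj (- (of_real (1 / r ^ 3) * z)) * (of_real b1 * z ^ (l + 1)) = - of_real (b1 / r ^ 3) * (cnj z * z) * z ^ l"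
      by (simp add: algebra_simps)
    show ?thesis unfolding qmul_qc e1 cz by (simp add: algebra_simps diff_divide_distrib)
  qed
  have P1: "k * t * Rl - (1 - t\<^sup>2) * Rl1 = k * (real (Suc n) - real l) * poly (LD l (Suc n)) t"
    using Rp_rel(1)[where n=n and l=l and t=t] by (simp add: k_def Rl_def Rl1_def)
  have P2: "t * Rl1 + k * Rl = k * poly (LD (Suc l) (Suc n)) t"
    using Rp_rel(2)[where n=n and l=l and t=t] by (simp add: k_def Rl_def Rl1_def)
  have kp: "kap n l = S * Nn n l * (- 1) ^ l * Cc n l / 2 * k" by (simp add: kap_def S_def k_def)
  have AF: "S * (r * t * a1 / r ^ 3 + b1 * (r\<^sup>2 - (r * t)\<^sup>2) / r ^ 3) = kap n l * (real (Suc n) - real l) / r ^ (n + l + 2) * poly (LD l (Suc n)) t"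
    using alg_F[OF r P1, where S=S and Nn="Nn n l" and D="Cc n l" and n=n and l=l] unfolding kp a1_def b1_def by (simp add: mult_ac)
  have AG: "S * (r * t * b1 / r ^ 3 - a1 / r ^ 3) = - kap n l / r ^ (n + l + 3) * poly (LD (Suc l) (Suc n)) t"
    using alg_G[OF r P2, where S=S and Nn="Nn n l" and D="Cc n l" and n=n and l=l] unfolding kp a1_def b1_def by (simp add: mult_ac)
  show ?thesis
    unfolding phi_neg_def kelvin_def pb pc F qscale_qc gf_def qc_eq_iff
    apply (simp only: of_real_mult[symmetric] mult.assoc[symmetric] r_def[symmetric] t_def[symmetric] z_def[symmetric])
    apply (simp only: tr S_def[symmetric] AF AG)
    done
qed


definition Phi :: "real \<Rightarrow> nat \<Rightarrow> nat \<Rightarrow> pt \<Rightarrow> quat" where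
  "Phi A n l x = qc (gf (A * (real (Suc n) - real l)) (n + l + 2) (LD l (Suc n)) l x)
                    (gf (- A) (n + l + 3) (LD (Suc l) (Suc n)) (Suc l) x)"

lemma phi_neg_Phi: "phi_neg n l = Phi (kap n l) n l"
proof
  fix x
  show "phi_neg n l x = Phi (kap n l) n l x"
  proof (cases "x = 0")
    case True
    have p: "pnorm x = 0" using True by (simp add: pnorm_def zero_prod_def)
    show ?thesis unfolding Phi_def gf_def phi_neg_def kelvin_def p
      by (simp add: qc_def qscale_def qmul_def True zz_def zero_prod_def)
  next
    case False
    then show ?thesis using phi_neg_eq_pt[OF False] by (simp add: Phi_def)
  qed
qed

lemma qscale_Phi: "qscale c (Phi A n l x) = Phi (c * A) n l x"
  by (simp add: Phi_def qscale_qc gf_def mult_ac)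

lemma Dbar_qc:
  assumes "pdiff 0 f x = qc F0 G0" "pdiff 1 f x = qc F1 G1" "pdiff 2 f x = qc F2 G2"
  shows "Dbar f x = qc (F0 - (G1 - \<i> * G2)) (G0 + (F1 + \<i> * F2))"
  unfolding Dbar_def assms by (simp add: qadd_def qmul_def qe1_def qe2_def qc_def)

lemma hderiv_eq_pdiff0: "Dbar f x = qzero \<Longrightarrow> hderiv f x = pdiff 0 f x"
  unfolding Dbar_def hderiv_def
  by (cases "pdiff 0 f x"; cases "pdiff 1 f x"; cases "pdiff 2 f x")
     (simp add: qadd_def qmul_def qe1_def qe2_def qzero_def qscale_def)


lemma pdiff_qc:
  assumes F: "((\<lambda>s. F (x + s *\<^sub>R unit_dir i)) has_vector_derivative dF) (at 0)"
      and G: "((\<lambda>s. G (x + s *\<^sub>R unit_dir i)) has_vector_derivative dG) (at 0)"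
  shows "pdiff i (\<lambda>x. qc (F x) (G x)) x = qc dF dG"
proof -
  have re: "\<And>H dH. ((\<lambda>s. H (x + s *\<^sub>R unit_dir i)) has_vector_derivative dH) (at 0) \<Longrightarrow>
      deriv (\<lambda>s. Re (H (x + s *\<^sub>R unit_dir i))) 0 = Re dH"
    by (rule DERIV_imp_deriv, unfold has_real_derivative_iff_has_vector_derivative)
       (rule bounded_linear.has_vector_derivative[OF bounded_linear_Re])
  have im: "\<And>H dH. ((\<lambda>s. H (x + s *\<^sub>R unit_dir i)) has_vector_derivative dH) (at 0) \<Longrightarrow>
      deriv (\<lambda>s. Im (H (x + s *\<^sub>R unit_dir i))) 0 = Im dH"
    by (rule DERIV_imp_deriv, unfold has_real_derivative_iff_has_vector_derivative)
       (rule bounded_linear.has_vector_derivative[OF bounded_linear_Im])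
  have mim: "deriv (\<lambda>s. - Im (F (x + s *\<^sub>R unit_dir i))) 0 = - Im dF"
    by (rule DERIV_imp_deriv, rule DERIV_minus, unfold has_real_derivative_iff_has_vector_derivative)
       (rule bounded_linear.has_vector_derivative[OF bounded_linear_Im F])
  show ?thesis unfolding pdiff_def qc_def using re[OF F] re[OF G] im[OF G] mim by simp
qed

lemma h_deriv:
  fixes \<rho> \<phi> :: "real \<Rightarrow> real"
  assumes r1: "DERIV \<rho> 0 :> \<rho>'" and r2: "\<rho> 0 = r" and r: "r > 0"
      and f1: "DERIV \<phi> 0 :> \<phi>'" and f2: "\<phi> 0 = x0"
  shows "DERIV (\<lambda>s. a / \<rho> s ^ k * poly p (\<phi> s / \<rho> s)) 0 :>
     a / r ^ (k + 2) * (- (real k) * (r * \<rho>') * poly p (x0 / r) + (\<phi>' * r - x0 * \<rho>') * poly (pderiv p) (x0 / r))"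
proof -
  have d1: "DERIV (\<lambda>s. \<rho> s ^ k) 0 :> real k * (\<rho>' * r ^ (k - Suc 0))"
    using DERIV_power[OF r1, of k] by (simp add: r2)
  have d2: "DERIV (\<lambda>s. inverse (\<rho> s ^ k)) 0 :> - (real k * (\<rho>' * r ^ (k - Suc 0)) * (inverse (r ^ k) * inverse (r ^ k)))"
    using DERIV_inverse_fun[OF d1] r by (simp add: r2)
  have d3: "DERIV (\<lambda>s. \<phi> s / \<rho> s) 0 :> (\<phi>' * r - x0 * \<rho>') / (r * r)"
    using DERIV_divide[OF f1 r1] r by (simp add: r2 f2)
  have d4: "DERIV (\<lambda>s. poly p (\<phi> s / \<rho> s)) 0 :> poly (pderiv p) (x0 / r) * ((\<phi>' * r - x0 * \<rho>') / (r * r))"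
    using DERIV_chain2[OF poly_DERIV d3] by (simp add: r2 f2)
  have d5: "DERIV (\<lambda>s. a * inverse (\<rho> s ^ k) * poly p (\<phi> s / \<rho> s)) 0 :>
      a * (- (real k * (\<rho>' * r ^ (k - Suc 0)) * (inverse (r ^ k) * inverse (r ^ k)))) * poly p (x0 / r)
      + a * inverse (r ^ k) * (poly (pderiv p) (x0 / r) * ((\<phi>' * r - x0 * \<rho>') / (r * r)))"
    by (rule DERIV_cong[OF DERIV_mult[OF DERIV_cmult[OF d2, of a] d4]]) (simp add: r2 f2 algebra_simps)
  have e: "a * (- (real k * (\<rho>' * r ^ (k - Suc 0)) * (inverse (r ^ k) * inverse (r ^ k)))) * poly p (x0 / r)
      + a * inverse (r ^ k) * (poly (pderiv p) (x0 / r) * ((\<phi>' * r - x0 * \<rho>') / (r * r)))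
     = a / r ^ (k + 2) * (- (real k) * (r * \<rho>') * poly p (x0 / r) + (\<phi>' * r - x0 * \<rho>') * poly (pderiv p) (x0 / r))"
  proof (cases k)
    case 0 thus ?thesis using r by (simp add: field_simps power2_eq_square)
  next
    case (Suc j)
    have rj: "r ^ j > 0" using r by simp
    show ?thesis using r rj by (simp add: Suc field_simps power2_eq_square)
  qed
  show ?thesis using d5 unfolding e by (simp add: divide_inverse mult_ac)
qed


definition dd :: "pt \<Rightarrow> pt \<Rightarrow> real" where
  "dd x v = fst x * fst v + fst (snd x) * fst (snd v) + snd (snd x) * snd (snd v)"

lemma pnorm_line_DERIV:
  assumes x: "x \<noteq> 0"
  shows "DERIV (\<lambda>s. pnorm (x + s *\<^sub>R v)) 0 :> dd x v / pnorm x"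
proof -
  define Q where "Q = (\<lambda>s. (fst x + s * fst v)\<^sup>2 + (fst (snd x) + s * fst (snd v))\<^sup>2 + (snd (snd x) + s * snd (snd v))\<^sup>2)"
  have pq: "(\<lambda>s. pnorm (x + s *\<^sub>R v)) = (\<lambda>s. sqrt (Q s))"
    by (rule ext) (simp add: pnorm_def Q_def)
  have s0: "sqrt (Q 0) = pnorm x" by (simp add: Q_def pnorm_def)
  have p: "pnorm x > 0" using pnorm_pos[OF x] .
  have q0: "Q 0 > 0" using p s0 by (metis real_sqrt_gt_0_iff real_sqrt_lt_0_iff linorder_neqE_linordered_idom real_sqrt_eq_zero_cancel_iff less_irrefl)
  have dq: "DERIV Q 0 :> 2 * dd x v"
  proof -
    have sq: "\<And>c d::real. DERIV (\<lambda>s. (c + s * d)\<^sup>2) 0 :> 2 * c * d"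
    proof -
      fix c d :: real
      have l: "DERIV (\<lambda>s. c + s * d) 0 :> d"
        by (rule DERIV_cong[OF DERIV_add[OF DERIV_const DERIV_cmult_right[OF DERIV_ident]]]) simp
      show "DERIV (\<lambda>s. (c + s * d)\<^sup>2) 0 :> 2 * c * d"
        by (rule DERIV_cong[OF DERIV_power[OF l, of 2]]) simp
    qed
    show ?thesis unfolding Q_def dd_def
      by (rule DERIV_cong[OF DERIV_add[OF DERIV_add[OF sq sq] sq]]) (simp add: algebra_simps)
  qed
  have "DERIV (\<lambda>s. sqrt (Q s)) 0 :> inverse (sqrt (Q 0)) / 2 * (2 * dd x v)"
    by (rule DERIV_chain2[OF DERIV_real_sqrt[OF q0] dq])
  moreover have "inverse (sqrt (Q 0)) / 2 * (2 * dd x v) = dd x v / pnorm x"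
    unfolding s0 using p by (simp add: field_simps)
  ultimately show ?thesis unfolding pq by simp
qed

lemma zz_line: "zz (x + s *\<^sub>R v) = zz x + of_real s * zz v"
  by (simp add: zz_def complex_eq_iff)

lemma zz_pow_line:
  "((\<lambda>s. zz (x + s *\<^sub>R v) ^ m) has_vector_derivative (of_nat m * zz x ^ (m - 1) * zz v)) (at 0)"
proof -
  have "((\<lambda>w. (zz x + w * zz v) ^ m) has_field_derivative (of_nat m * zz x ^ (m - 1) * zz v)) (at (of_real 0))"
  proof -
    have l: "DERIV (\<lambda>w. zz x + w * zz v) (of_real 0) :> zz v"
      by (rule DERIV_cong[OF DERIV_add[OF DERIV_const DERIV_cmult_right[OF DERIV_ident]]]) simp
    show ?thesis by (rule DERIV_cong[OF DERIV_power[OF l, of m]]) simp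
  qed
  from has_vector_derivative_real_field[OF this] show ?thesis unfolding zz_line by simp
qed

lemma gf_line:
  assumes x: "x \<noteq> 0"
  shows "((\<lambda>s. gf a k p m (x + s *\<^sub>R v)) has_vector_derivative
    (of_real (a / pnorm x ^ (k + 2) * (- real k * (pnorm x * (dd x v / pnorm x)) * poly p (fst x / pnorm x)
       + (fst v * pnorm x - fst x * (dd x v / pnorm x)) * poly (pderiv p) (fst x / pnorm x))) * zz x ^ m
    + of_real (a / pnorm x ^ k * poly p (fst x / pnorm x)) * (of_nat m * zz x ^ (m - 1) * zz v))) (at 0)"
proof -
  have p: "pnorm x > 0" using pnorm_pos[OF x] .
  have x0v: "x + 0 *\<^sub>R v = x" by simp
  have r2: "pnorm (x + 0 *\<^sub>R v) = pnorm x" by (simp only: x0v)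
  have f2: "fst (x + 0 *\<^sub>R v) = fst x" by (simp only: x0v)
  have fe: "(\<lambda>s. fst (x + s *\<^sub>R v)) = (\<lambda>s. fst x + s * fst v)" by (rule ext) simp
  have f1: "DERIV (\<lambda>s. fst (x + s *\<^sub>R v)) 0 :> fst v"
    unfolding fe by (rule DERIV_cong[OF DERIV_add[OF DERIV_const DERIV_cmult_right[OF DERIV_ident]]]) simp
  have h: "DERIV (\<lambda>s. a / pnorm (x + s *\<^sub>R v) ^ k * poly p (fst (x + s *\<^sub>R v) / pnorm (x + s *\<^sub>R v))) 0 :>
     a / pnorm x ^ (k + 2) * (- real k * (pnorm x * (dd x v / pnorm x)) * poly p (fst x / pnorm x)
       + (fst v * pnorm x - fst x * (dd x v / pnorm x)) * poly (pderiv p) (fst x / pnorm x))"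
    using h_deriv[OF pnorm_line_DERIV[OF x] r2 p f1 f2, where a=a and k=k and p=p] by (simp only: x0v)
  have "((\<lambda>s. of_real (a / pnorm (x + s *\<^sub>R v) ^ k * poly p (fst (x + s *\<^sub>R v) / pnorm (x + s *\<^sub>R v))) * zz (x + s *\<^sub>R v) ^ m)
      has_vector_derivative
      (of_real (a / pnorm (x + 0 *\<^sub>R v) ^ k * poly p (fst (x + 0 *\<^sub>R v) / pnorm (x + 0 *\<^sub>R v))) * (of_nat m * zz x ^ (m - 1) * zz v)
       + of_real (a / pnorm x ^ (k + 2) * (- real k * (pnorm x * (dd x v / pnorm x)) * poly p (fst x / pnorm x)
       + (fst v * pnorm x - fst x * (dd x v / pnorm x)) * poly (pderiv p) (fst x / pnorm x))) * zz (x + 0 *\<^sub>R v) ^ m)) (at 0)"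
    by (rule has_vector_derivative_mult[OF has_vector_derivative_of_real[OF h] zz_pow_line])
  thus ?thesis unfolding gf_def x0v by (simp only: add.commute)
qed


lemma ud0: "unit_dir 0 = (1, 0, 0)" and ud1: "unit_dir 1 = (0, 1, 0)" and ud2: "unit_dir 2 = (0, 0, 1)"
  by (simp_all add: unit_dir_def)

lemma gf_d0:
  assumes x: "x \<noteq> 0"
  shows "((\<lambda>s. gf a k p m (x + s *\<^sub>R unit_dir 0)) has_vector_derivative
    of_real (a / pnorm x ^ (k + 1) * (- real k * (fst x / pnorm x) * poly p (fst x / pnorm x)
       + (1 - (fst x / pnorm x)\<^sup>2) * poly (pderiv p) (fst x / pnorm x))) * zz x ^ m) (at 0)"
proof -
  have p: "pnorm x > 0" using pnorm_pos[OF x] .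
  have e: "a / pnorm x ^ (k + 2) * (- real k * (pnorm x * (dd x (unit_dir 0) / pnorm x)) * poly p (fst x / pnorm x)
       + (fst (unit_dir 0) * pnorm x - fst x * (dd x (unit_dir 0) / pnorm x)) * poly (pderiv p) (fst x / pnorm x))
     = a / pnorm x ^ (k + 1) * (- real k * (fst x / pnorm x) * poly p (fst x / pnorm x)
       + (1 - (fst x / pnorm x)\<^sup>2) * poly (pderiv p) (fst x / pnorm x))"
    using p by (simp add: ud0 dd_def field_simps power2_eq_square)
  have z0: "zz (unit_dir 0) = 0" by (simp add: ud0 zz_def complex_eq_iff)
  show ?thesis using gf_line[OF x, of a k p m "unit_dir 0"] unfolding e z0 by simp
qed

lemma gf_d1:
  assumes x: "x \<noteq> 0"
  shows "((\<lambda>s. gf a k p m (x + s *\<^sub>R unit_dir 1)) has_vector_derivative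
    of_real (fst (snd x) * (a / pnorm x ^ (k + 2) * (- real k * poly p (fst x / pnorm x)
       - (fst x / pnorm x) * poly (pderiv p) (fst x / pnorm x)))) * zz x ^ m
    + of_real (a / pnorm x ^ k * poly p (fst x / pnorm x)) * (of_nat m * zz x ^ (m - 1))) (at 0)"
proof -
  have p: "pnorm x > 0" using pnorm_pos[OF x] .
  have e: "a / pnorm x ^ (k + 2) * (- real k * (pnorm x * (dd x (unit_dir 1) / pnorm x)) * poly p (fst x / pnorm x)
       + (fst (unit_dir 1) * pnorm x - fst x * (dd x (unit_dir 1) / pnorm x)) * poly (pderiv p) (fst x / pnorm x))
     = fst (snd x) * (a / pnorm x ^ (k + 2) * (- real k * poly p (fst x / pnorm x)
       - (fst x / pnorm x) * poly (pderiv p) (fst x / pnorm x)))"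
    using p by (simp add: unit_dir_def dd_def field_simps)
  have z1: "zz (unit_dir 1) = 1" by (simp add: unit_dir_def zz_def complex_eq_iff)
  show ?thesis using gf_line[OF x, of a k p m "unit_dir 1"] unfolding e z1 by simp
qed

lemma gf_d2:
  assumes x: "x \<noteq> 0"
  shows "((\<lambda>s. gf a k p m (x + s *\<^sub>R unit_dir 2)) has_vector_derivative
    of_real (snd (snd x) * (a / pnorm x ^ (k + 2) * (- real k * poly p (fst x / pnorm x)
       - (fst x / pnorm x) * poly (pderiv p) (fst x / pnorm x)))) * zz x ^ m
    + of_real (a / pnorm x ^ k * poly p (fst x / pnorm x)) * (\<i> * (of_nat m * zz x ^ (m - 1)))) (at 0)"
proof -
  have p: "pnorm x > 0" using pnorm_pos[OF x] .
  have e: "a / pnorm x ^ (k + 2) * (- real k * (pnorm x * (dd x (unit_dir 2) / pnorm x)) * poly p (fst x / pnorm x)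
       + (fst (unit_dir 2) * pnorm x - fst x * (dd x (unit_dir 2) / pnorm x)) * poly (pderiv p) (fst x / pnorm x))
     = snd (snd x) * (a / pnorm x ^ (k + 2) * (- real k * poly p (fst x / pnorm x)
       - (fst x / pnorm x) * poly (pderiv p) (fst x / pnorm x)))"
    using p by (simp add: unit_dir_def dd_def field_simps)
  have z2: "zz (unit_dir 2) = \<i>" by (simp add: ud2 zz_def complex_eq_iff)
  show ?thesis using gf_line[OF x, of a k p m "unit_dir 2"] unfolding e z2 by (simp add: mult_ac)
qed


lemma combo_minus:
  assumes z: "z = Complex x1 x2"
  shows "(of_real (x1 * g) * z ^ Suc j + of_real H * (of_nat (Suc j) * z ^ (Suc j - 1)))
     - \<i> * (of_real (x2 * g) * z ^ Suc j + of_real H * (\<i> * (of_nat (Suc j) * z ^ (Suc j - 1))))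
     = of_real (g * (x1\<^sup>2 + x2\<^sup>2) + 2 * real (Suc j) * H) * z ^ j"
  unfolding z by (simp add: complex_eq_iff algebra_simps power2_eq_square)

lemma combo_plus:
  assumes z: "z = Complex x1 x2"
  shows "(of_real (x1 * g) * z ^ m + of_real H * (of_nat m * z ^ (m - 1)))
     + \<i> * (of_real (x2 * g) * z ^ m + of_real H * (\<i> * (of_nat m * z ^ (m - 1))))
     = of_real g * z ^ Suc m"
  unfolding z by (simp add: complex_eq_iff algebra_simps)


lemma Phi_fun: "Phi A n l = (\<lambda>x. qc (gf (A * (real (Suc n) - real l)) (n + l + 2) (LD l (Suc n)) l x)
                    (gf (- A) (n + l + 3) (LD (Suc l) (Suc n)) (Suc l) x))"
  by (rule ext) (simp add: Phi_def)

lemma pderiv_LD: "pderiv (LD m N) = LD (Suc m) N" by simp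

lemma ode_t: "(1 - t\<^sup>2) * poly (pderiv (pderiv (LD l N))) t = 2 * (real l + 1) * t * poly (pderiv (LD l N)) t
     - (real N * (real N + 1) - real l * (real l + 1)) * poly (LD l N) t"
  using arg_cong[OF leg_ODE[of l N], of "\<lambda>p. poly p t"]
  by (simp add: algebra_simps power2_eq_square)

lemma xs_sq: "x \<noteq> 0 \<Longrightarrow> (fst (snd x))\<^sup>2 + (snd (snd x))\<^sup>2 = (pnorm x)\<^sup>2 * (1 - (fst x / pnorm x)\<^sup>2)"
proof -
  assume x: "x \<noteq> 0"
  have p: "pnorm x > 0" using pnorm_pos[OF x] .
  have "(pnorm x)\<^sup>2 = (fst x)\<^sup>2 + (fst (snd x))\<^sup>2 + (snd (snd x))\<^sup>2"
    unfolding pnorm_def by (rule real_sqrt_pow2) simp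
  moreover have "(pnorm x)\<^sup>2 * (1 - (fst x / pnorm x)\<^sup>2) = (pnorm x)\<^sup>2 - (fst x)\<^sup>2"
    using p by (simp add: field_simps power_divide)
  ultimately show ?thesis by simp
qed

lemma R1:
  fixes r t A P0 P1 P2 S :: real
  assumes r: "r > 0" and S: "S = r\<^sup>2 * (1 - t\<^sup>2)"
    and ode: "(1 - t\<^sup>2) * P2 = 2 * (real l + 1) * t * P1 - (real (Suc n) * (real (Suc n) + 1) - real l * (real l + 1)) * P0"
  shows "A * (real (Suc n) - real l) / r ^ (n + l + 2 + 1) * (- real (n + l + 2) * t * P0 + (1 - t\<^sup>2) * P1)
    - (- A / r ^ (n + l + 3 + 2) * (- real (n + l + 3) * P1 - t * P2) * S + 2 * real (Suc l) * (- A / r ^ (n + l + 3) * P1)) = 0"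
proof -
  define u where "u = r ^ (n + l + 3)"
  have u: "u > 0" using r by (simp add: u_def)
  have e1: "r ^ (n + l + 2 + 1) = u" unfolding u_def by (rule arg_cong[where f="\<lambda>k. r ^ k"]) simp
  have e2: "r ^ (n + l + 3 + 2) = u * r\<^sup>2" by (simp add: u_def power_add)
  have "A * (real (Suc n) - real l) / r ^ (n + l + 2 + 1) * (- real (n + l + 2) * t * P0 + (1 - t\<^sup>2) * P1)
    - (- A / r ^ (n + l + 3 + 2) * (- real (n + l + 3) * P1 - t * P2) * S + 2 * real (Suc l) * (- A / r ^ (n + l + 3) * P1))
    = A / u * ((real (Suc n) - real l) * (- real (n + l + 2) * t * P0 + (1 - t\<^sup>2) * P1)
        + (1 - t\<^sup>2) * (- real (n + l + 3) * P1) - t * ((1 - t\<^sup>2) * P2) + 2 * real (Suc l) * P1)"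
    unfolding e1 e2 S u_def[symmetric] using r u by (simp add: field_simps)
  also have "\<dots> = 0" unfolding ode by (simp add: algebra_simps power2_eq_square)
  finally show ?thesis .
qed

lemma R2:
  fixes r t A P0 P1 P2 :: real
  assumes r: "r > 0"
    and ode: "(1 - t\<^sup>2) * P2 = 2 * (real l + 1) * t * P1 - (real (Suc n) * (real (Suc n) + 1) - real l * (real l + 1)) * P0"
  shows "- A / r ^ (n + l + 3 + 1) * (- real (n + l + 3) * t * P1 + (1 - t\<^sup>2) * P2)
    + A * (real (Suc n) - real l) / r ^ (n + l + 2 + 2) * (- real (n + l + 2) * P0 - t * P1) = 0"
proof -
  define u where "u = r ^ (n + l + 4)"
  have u: "u > 0" using r by (simp add: u_def)
  have e1: "r ^ (n + l + 3 + 1) = u" unfolding u_def by (rule arg_cong[where f="\<lambda>k. r ^ k"]) simp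
  have e2: "r ^ (n + l + 2 + 2) = u" unfolding u_def by (rule arg_cong[where f="\<lambda>k. r ^ k"]) simp
  have "- A / r ^ (n + l + 3 + 1) * (- real (n + l + 3) * t * P1 + (1 - t\<^sup>2) * P2)
    + A * (real (Suc n) - real l) / r ^ (n + l + 2 + 2) * (- real (n + l + 2) * P0 - t * P1)
    = A / u * (real (n + l + 3) * t * P1 - (1 - t\<^sup>2) * P2
        + (real (Suc n) - real l) * (- real (n + l + 2) * P0 - t * P1))"
    unfolding e1 e2 using u by (simp add: field_simps)
  also have "\<dots> = 0" unfolding ode by (simp add: algebra_simps)
  finally show ?thesis .
qed

lemma Phi_Dbar:
  assumes x: "x \<noteq> 0"
  shows "Dbar (Phi A n l) x = qzero"
proof -
  note P0 = pdiff_qc[OF gf_d0[OF x, of "A * (real (Suc n) - real l)" "n + l + 2" "LD l (Suc n)" l]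
                        gf_d0[OF x, of "- A" "n + l + 3" "LD (Suc l) (Suc n)" "Suc l"]]
  note P1 = pdiff_qc[OF gf_d1[OF x, of "A * (real (Suc n) - real l)" "n + l + 2" "LD l (Suc n)" l]
                        gf_d1[OF x, of "- A" "n + l + 3" "LD (Suc l) (Suc n)" "Suc l"]]
  note P2 = pdiff_qc[OF gf_d2[OF x, of "A * (real (Suc n) - real l)" "n + l + 2" "LD l (Suc n)" l]
                        gf_d2[OF x, of "- A" "n + l + 3" "LD (Suc l) (Suc n)" "Suc l"]]
  note D = Dbar_qc[OF P0 P1 P2, folded Phi_fun]
  have zc: "zz x = Complex (fst (snd x)) (snd (snd x))" by (simp add: zz_def)
  note D' = D[unfolded combo_minus[OF zc] combo_plus[OF zc]]
  have g1: "\<And>u v (w::complex). u - v = 0 \<Longrightarrow> of_real u * w - of_real v * w = 0"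
    by (metis diff_self eq_iff_diff_eq_0)
  have g2: "\<And>u v (w::complex). u + v = 0 \<Longrightarrow> of_real u * w + of_real v * w = 0"
    by (metis add.inverse_unique distrib_right mult_zero_left of_real_0 of_real_add)
  show ?thesis unfolding D' qzero_qc qc_eq_iff
    apply (intro conjI g1 g2)
    unfolding pderiv_LD
     apply (rule R1[OF pnorm_pos[OF x] xs_sq[OF x] ode_t[unfolded pderiv_LD]])
    apply (rule R2[OF pnorm_pos[OF x] ode_t[unfolded pderiv_LD]])
    done
qed


lemma I2_t: "(1 - t\<^sup>2) * poly (pderiv (LD m N)) t - (real N + real m + 1) * t * poly (LD m N) t
   = (real m - real N - 1) * poly (LD m (Suc N)) t"
  using arg_cong[OF leg_I2[of m N], of "\<lambda>p. poly p t"] by (simp add: algebra_simps power2_eq_square)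

lemma aux_div: "(a::real) * c = b \<Longrightarrow> a / R * (c * L) = b / R * L"
  by (metis times_divide_eq_left mult.assoc mult.commute)

lemma I2a: "- real (n + l + 2) * t * poly (LD l (Suc n)) t + (1 - t\<^sup>2) * poly (pderiv (LD l (Suc n))) t
       = (real l - real (Suc n) - 1) * poly (LD l (Suc (Suc n))) t"
  using I2_t[of t l "Suc n"] by (simp del: legendre.simps funpow.simps add: algebra_simps)

lemma I2b: "- real (n + l + 3) * t * poly (LD (Suc l) (Suc n)) t + (1 - t\<^sup>2) * poly (pderiv (LD (Suc l) (Suc n))) t
       = (real (Suc l) - real (Suc n) - 1) * poly (LD (Suc l) (Suc (Suc n))) t"
  using I2_t[of t "Suc l" "Suc n"] by (simp del: legendre.simps funpow.simps add: algebra_simps)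

lemma Phi_pdiff0:
  assumes x: "x \<noteq> 0"
  shows "pdiff 0 (Phi A n l) x = Phi (- A * (real (Suc n) - real l)) (Suc n) l x"
proof -
  note P0 = pdiff_qc[OF gf_d0[OF x, of "A * (real (Suc n) - real l)" "n + l + 2" "LD l (Suc n)" l]
                        gf_d0[OF x, of "- A" "n + l + 3" "LD (Suc l) (Suc n)" "Suc l"], folded Phi_fun]
  let ?r = "pnorm x" and ?t = "fst x / pnorm x"
  have e1: "A * (real (Suc n) - real l) / ?r ^ (n + l + 2 + 1) *
      (- real (n + l + 2) * ?t * poly (LD l (Suc n)) ?t + (1 - ?t\<^sup>2) * poly (pderiv (LD l (Suc n))) ?t)
    = - A * (real (Suc n) - real l) * (real (Suc (Suc n)) - real l) / ?r ^ (Suc n + l + 2) * poly (LD l (Suc (Suc n))) ?t"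
  proof -
    have i: "- real (n + l + 2) * ?t * poly (LD l (Suc n)) ?t + (1 - ?t\<^sup>2) * poly (pderiv (LD l (Suc n))) ?t
       = (real l - real (Suc n) - 1) * poly (LD l (Suc (Suc n))) ?t"
      by (rule I2a)
    have p: "?r ^ (n + l + 2 + 1) = ?r ^ (Suc n + l + 2)" by (rule arg_cong[where f="\<lambda>k. ?r ^ k"]) simp
    show ?thesis unfolding i p by (rule aux_div) (simp add: algebra_simps)
  qed
  have e2: "- A / ?r ^ (n + l + 3 + 1) *
      (- real (n + l + 3) * ?t * poly (LD (Suc l) (Suc n)) ?t + (1 - ?t\<^sup>2) * poly (pderiv (LD (Suc l) (Suc n))) ?t)
    = - (- A * (real (Suc n) - real l)) / ?r ^ (Suc n + l + 3) * poly (LD (Suc l) (Suc (Suc n))) ?t"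
  proof -
    have i: "- real (n + l + 3) * ?t * poly (LD (Suc l) (Suc n)) ?t + (1 - ?t\<^sup>2) * poly (pderiv (LD (Suc l) (Suc n))) ?t
       = (real (Suc l) - real (Suc n) - 1) * poly (LD (Suc l) (Suc (Suc n))) ?t"
      by (rule I2b)
    have p: "?r ^ (n + l + 3 + 1) = ?r ^ (Suc n + l + 3)" by (rule arg_cong[where f="\<lambda>k. ?r ^ k"]) simp
    show ?thesis unfolding i p by (rule aux_div) (simp add: algebra_simps)
  qed
  show ?thesis unfolding P0 unfolding Phi_def gf_def e1 e2 by (simp add: mult_ac)
qed


lemma pnorm_norm: "pnorm x = norm x"
  by (cases x) (simp add: pnorm_def norm_Pair add.assoc)

lemma zz_alt: "zz = (\<lambda>y. of_real (fst (snd y)) + \<i> * of_real (snd (snd y)))"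
  by (rule ext) (simp add: zz_def complex_eq_iff)

lemma of_real_diff_at: "(of_real :: real \<Rightarrow> complex) differentiable (at u)"
  by (rule bounded_linear_imp_differentiable[OF bounded_linear_of_real])

lemma zz_differentiable: "zz differentiable (at x)"
proof -
  have a: "(\<lambda>y::pt. fst (snd y)) differentiable (at x)"
    by (rule bounded_linear_imp_differentiable) (intro bounded_linear_compose[OF bounded_linear_fst] bounded_linear_snd)
  have b: "(\<lambda>y::pt. snd (snd y)) differentiable (at x)"
    by (rule bounded_linear_imp_differentiable) (intro bounded_linear_compose[OF bounded_linear_snd] bounded_linear_snd)
  show ?thesis unfolding zz_alt
    by (intro differentiable_add differentiable_mult differentiable_const
        differentiable_compose[of "of_real :: real \<Rightarrow> complex", OF of_real_diff_at a]
        differentiable_compose[of "of_real :: real \<Rightarrow> complex", OF of_real_diff_at b])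
qed

lemma gf_differentiable:
  assumes x: "x \<noteq> 0"
  shows "gf a k p m differentiable (at x)"
proof -
  have nz: "norm x \<noteq> 0" using x by simp
  have f: "(\<lambda>y::pt. fst y) differentiable (at x)"
    by (rule bounded_linear_imp_differentiable[OF bounded_linear_fst])
  have pd: "poly p differentiable (at u)" for u :: real
    using poly_DERIV[of p u] by (metis differentiableI has_field_derivative_imp_has_derivative)
  have t: "(\<lambda>y::pt. fst y / norm y) differentiable (at x)"
    by (intro differentiable_divide f differentiable_norm_at x nz)
  have h: "(\<lambda>y::pt. a / norm y ^ k * poly p (fst y / norm y)) differentiable (at x)"
    by (intro differentiable_mult differentiable_divide differentiable_const differentiable_power
        differentiable_norm_at x differentiable_compose[of "poly p", OF pd t]) (simp add: nz x)
  have gf: "gf a k p m = (\<lambda>y. of_real (a / norm y ^ k * poly p (fst y / norm y)) * zz y ^ m)"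
    by (rule ext) (simp add: gf_def pnorm_norm)
  show ?thesis unfolding gf
    by (intro differentiable_mult differentiable_power zz_differentiable
        differentiable_compose[of "of_real :: real \<Rightarrow> complex", OF of_real_diff_at h])
qed

lemma Re_diff: "f differentiable (at x) \<Longrightarrow> (\<lambda>y. Re (f y)) differentiable (at x)"
  by (rule differentiable_compose[OF bounded_linear_imp_differentiable[OF bounded_linear_Re]])
lemma Im_diff: "f differentiable (at x) \<Longrightarrow> (\<lambda>y. Im (f y)) differentiable (at x)"
  by (rule differentiable_compose[OF bounded_linear_imp_differentiable[OF bounded_linear_Im]])

lemma Phi_monogenic: "monogenic_on (UNIV - {0}) (Phi A n l)"
  unfolding monogenic_on_def
proof (intro conjI ballI)
  show "open (UNIV - {0::pt})" by (simp add: open_Diff)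
next
  fix x :: pt assume "x \<in> UNIV - {0}"
  hence x: "x \<noteq> 0" by simp
  note gF = gf_differentiable[OF x, of "A * (real (Suc n) - real l)" "n + l + 2" "LD l (Suc n)" l]
  note gG = gf_differentiable[OF x, of "- A" "n + l + 3" "LD (Suc l) (Suc n)" "Suc l"]
  show "(\<lambda>p. q0 (Phi A n l p)) differentiable at x" unfolding Phi_def qc_def using Re_diff[OF gF] by simp
  show "(\<lambda>p. q1 (Phi A n l p)) differentiable at x" unfolding Phi_def qc_def using Re_diff[OF gG] by simp
  show "(\<lambda>p. q2 (Phi A n l p)) differentiable at x" unfolding Phi_def qc_def using Im_diff[OF gG] by simp
  show "(\<lambda>p. q3 (Phi A n l p)) differentiable at x" unfolding Phi_def qc_def using differentiable_minus[OF Im_diff[OF gF]] by simp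
  show "Dbar (Phi A n l) x = qzero" by (rule Phi_Dbar[OF x])
qed


lemma sqrt_cancel: "(v::real) > 0 \<Longrightarrow> sqrt (u / v) * sqrt (v * W) = sqrt (u * W)"
  by (simp add: real_sqrt_mult[symmetric])

lemma kap_closed: "kap n l = (- 1) ^ l / 2 * sqrt (real (2 * n + 1) * fact (n - l) * fact (n + l + 1) / pi) / fact (n + l + 1)"
proof -
  define F1 :: real where "F1 = fact (n - l)"
  define F2 :: real where "F2 = fact (n + l + 1)"
  have F2p: "F2 > 0" by (simp add: F2_def)
  have f: "(fact (n + l + 2) :: real) = real (n + l + 2) * F2"
    by (simp add: F2_def fact_Suc[of "n + l + 1", simplified] algebra_simps)
  have s: "sqrt (real (2 * n + 1) / real (2 * n + 3)) * sqrt (real (2 * n + 3) * F1 * F2 / pi)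
      = sqrt (real (2 * n + 1) * F1 * F2 / pi)"
    using sqrt_cancel[of "real (2 * n + 3)" "real (2 * n + 1)" "F1 * F2 / pi"] by (simp add: mult.assoc times_divide_eq_right)
  have gen: "\<And>s1 s2 c e f g :: real. c \<noteq> 0 \<Longrightarrow> s1 * (1 / c * s2) * e * (c / f) / 2 * g = s1 * s2 * (e / 2) * (g / f)"
    by (simp add: field_simps)
  have c: "(2 ^ (l + 1) * fact n :: real) \<noteq> 0" by simp
  have "kap n l = sqrt (real (2 * n + 1) / real (2 * n + 3)) * sqrt (real (2 * n + 3) * F1 * F2 / pi)
      * ((- 1) ^ l / 2) * (real (n + l + 2) / fact (n + l + 2))"
    unfolding kap_def Nn_def Cc_def F1_def F2_def by (rule gen[OF c])
  also have "\<dots> = (- 1) ^ l / 2 * sqrt (real (2 * n + 1) * F1 * F2 / pi) / F2"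
  proof -
    have gg: "real (n + l + 2) / (real (n + l + 2) * F2) = 1 / F2" by simp
    show ?thesis unfolding s f gg by simp
  qed
  finally show ?thesis by (simp add: F1_def F2_def)
qed

lemma kap_rel:
  assumes "l \<le> n"
  shows "kap n l * (real (Suc n) - real l)
     = sqrt (real (2 * n + 1) * real (n - l + 1) * real (n + l + 2) / real (2 * n + 3)) * kap (n + 1) l"
proof -
  define F1 :: real where "F1 = fact (n - l)"
  define F2 :: real where "F2 = fact (n + l + 1)"
  define a :: real where "a = real (n - l + 1)"
  define b :: real where "b = real (n + l + 2)"
  define Y where "Y = real (2 * n + 1) * F1 * F2 / pi"
  have a: "a > 0" and b: "b > 0" and F2p: "F2 > 0" by (simp_all add: a_def b_def F2_def)
  have Y: "Y \<ge> 0" by (simp add: Y_def F1_def F2_def)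
  have fa: "(fact (n + 1 - l) :: real) = a * F1"
  proof -
    have "n + 1 - l = Suc (n - l)" using assms by simp
    thus ?thesis by (simp add: a_def F1_def fact_Suc assms Suc_diff_le)
  qed
  have fb: "(fact (n + 1 + l + 1) :: real) = b * F2"
  proof -
    have "n + 1 + l + 1 = Suc (n + l + 1)" by simp
    thus ?thesis by (simp add: b_def F2_def fact_Suc algebra_simps)
  qed
  have k1: "kap (n + 1) l = (- 1) ^ l / 2 * sqrt (real (2 * n + 3) * (a * F1) * (b * F2) / pi) / (b * F2)"
    unfolding kap_closed fa[symmetric] fb[symmetric] by (simp add: algebra_simps)
  have k0: "kap n l = (- 1) ^ l / 2 * sqrt Y / F2" unfolding kap_closed Y_def F1_def F2_def by simp
  have ss: "sqrt (real (2 * n + 1) * a * b / real (2 * n + 3)) * sqrt (real (2 * n + 3) * (a * F1) * (b * F2) / pi)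
      = a * b * sqrt Y"
  proof -
    have "real (2 * n + 1) * a * b / real (2 * n + 3) * (real (2 * n + 3) * (a * F1) * (b * F2) / pi) = (a * b)\<^sup>2 * Y"
    proof -
      have v: "real (2 * n + 3) \<noteq> 0" by simp
      have "real (2 * n + 1) * a * b / real (2 * n + 3) * (real (2 * n + 3) * (a * F1) * (b * F2) / pi)
         = real (2 * n + 1) * a * b * ((a * F1) * (b * F2) / pi)"
      proof -
        have gv: "\<And>u v W :: real. v \<noteq> 0 \<Longrightarrow> u / v * (v * W) = u * W" by simp
        show ?thesis using gv[OF v, of "real (2 * n + 1) * a * b" "(a * F1) * (b * F2) / pi"]
          by (simp only: mult.assoc times_divide_eq_right)
      qed
      thus ?thesis by (simp add: Y_def field_simps power2_eq_square)
    qed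
    hence "sqrt (real (2 * n + 1) * a * b / real (2 * n + 3)) * sqrt (real (2 * n + 3) * (a * F1) * (b * F2) / pi) = sqrt ((a * b)\<^sup>2 * Y)"
      by (simp only: real_sqrt_mult[symmetric])
    also have "\<dots> = a * b * sqrt Y" using a b by (simp add: real_sqrt_mult)
    finally show ?thesis .
  qed
  have e: "real (Suc n) - real l = a" using assms by (simp add: a_def)
  show ?thesis unfolding e k0 k1 a_def[symmetric] b_def[symmetric]
  proof -
    have "sqrt (real (2 * n + 1) * a * b / real (2 * n + 3)) * ((- 1) ^ l / 2 * sqrt (real (2 * n + 3) * (a * F1) * (b * F2) / pi) / (b * F2))
      = (- 1) ^ l / 2 * (a * b * sqrt Y) / (b * F2)" unfolding ss[symmetric] by (simp add: field_simps)
    also have "\<dots> = (- 1) ^ l / 2 * sqrt Y / F2 * a" using b F2p by (simp add: field_simps)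
    finally show "(- 1) ^ l / 2 * sqrt Y / F2 * a = sqrt (real (2 * n + 1) * a * b / real (2 * n + 3)) * ((- 1) ^ l / 2 * sqrt (real (2 * n + 3) * (a * F1) * (b * F2) / pi) / (b * F2))"
      by simp
  qed
qed


lemma hderiv_Phi: "x \<noteq> 0 \<Longrightarrow> hderiv (Phi A n l) x = Phi (- A * (real (Suc n) - real l)) (Suc n) l x"
  using hderiv_eq_pdiff0[OF Phi_Dbar] Phi_pdiff0 by metis

lemma sqrt_inv_prod: "(X::real) > 0 \<Longrightarrow> Y > 0 \<Longrightarrow> sqrt (X / Y) * sqrt (Y / X) = 1"
  by (simp add: real_sqrt_mult[symmetric])

theorem mainTheorem7:
  shows "(\<forall>n l. l \<le> n \<longrightarrow> (\<forall>x::pt. x \<noteq> 0 \<longrightarrow>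
            hderiv (phi_neg n l) x =
              qscale (- sqrt (real (2 * n + 1) * real (n - l + 1) * real (n + l + 2) / real (2 * n + 3)))
                     (phi_neg (n + 1) l x)))
       \<and> (\<forall>n l. 1 \<le> n \<and> l < n \<longrightarrow>
            (let Pf = (\<lambda>x. qscale (- sqrt (real (2 * n + 1) / (real (2 * n - 1) * real (n - l) * real (n + l + 1))))
                                  (phi_neg (n - 1) l x))
             in monogenic_on (UNIV - {0}) Pf \<and> (\<forall>x::pt. x \<noteq> 0 \<longrightarrow> hderiv Pf x = phi_neg n l x)))"
proof (intro conjI allI impI)
  fix n l :: nat and x :: pt
  assume l: "l \<le> n" and x: "x \<noteq> 0"
  let ?C = "sqrt (real (2 * n + 1) * real (n - l + 1) * real (n + l + 2) / real (2 * n + 3))"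
  have h: "hderiv (phi_neg n l) x = Phi (- kap n l * (real (Suc n) - real l)) (Suc n) l x"
    unfolding phi_neg_Phi by (rule hderiv_Phi[OF x])
  have k: "- kap n l * (real (Suc n) - real l) = - ?C * kap (n + 1) l"
    using kap_rel[OF l] by (metis minus_mult_left)
  have s: "Suc n = n + 1" by simp
  show "hderiv (phi_neg n l) x = qscale (- ?C) (phi_neg (n + 1) l x)"
    unfolding phi_neg_Phi qscale_Phi hderiv_Phi[OF x] k by (simp only: s)
next
  fix n l :: nat
  assume nl: "1 \<le> n \<and> l < n"
  then obtain m where n: "n = Suc m" by (cases n) auto
  have lm: "l \<le> m" using nl n by simp
  define c where "c = - sqrt (real (2 * n + 1) / (real (2 * n - 1) * real (n - l) * real (n + l + 1)))"
  have Pf: "(\<lambda>x. qscale c (phi_neg (n - 1) l x)) = Phi (c * kap m l) m l"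
    by (rule ext) (simp add: n phi_neg_Phi qscale_Phi)
  have mono: "monogenic_on (UNIV - {0}) (\<lambda>x. qscale c (phi_neg (n - 1) l x))"
    unfolding Pf by (rule Phi_monogenic)
  have coef: "- (c * kap m l) * (real (Suc m) - real l) = kap n l"
  proof -
    define X where "X = real (2 * m + 3)"
    define Y where "Y = real (2 * m + 1) * real (m - l + 1) * real (m + l + 2)"
    have X: "X > 0" by (simp add: X_def)
    have Y: "Y > 0" by (simp add: Y_def)
    have c': "c = - sqrt (X / Y)"
      unfolding c_def X_def Y_def n using lm by (simp add: Suc_diff_le algebra_simps)
    have C: "sqrt (real (2 * m + 1) * real (m - l + 1) * real (m + l + 2) / real (2 * m + 3)) = sqrt (Y / X)"
      by (simp add: X_def Y_def)
    have "- (c * kap m l) * (real (Suc m) - real l) = - c * (kap m l * (real (Suc m) - real l))" by simp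
    also have "\<dots> = - c * (sqrt (Y / X) * kap (m + 1) l)" using kap_rel[OF lm] unfolding C by simp
    also have "\<dots> = (sqrt (X / Y) * sqrt (Y / X)) * kap (m + 1) l" unfolding c' by simp
    also have "\<dots> = kap n l" using sqrt_inv_prod[OF X Y] n by simp
    finally show ?thesis .
  qed
  have hd: "\<forall>x::pt. x \<noteq> 0 \<longrightarrow> hderiv (\<lambda>x. qscale c (phi_neg (n - 1) l x)) x = phi_neg n l x"
  proof (intro allI impI)
    fix x :: pt assume x: "x \<noteq> 0"
    show "hderiv (\<lambda>x. qscale c (phi_neg (n - 1) l x)) x = phi_neg n l x"
      unfolding Pf unfolding hderiv_Phi[OF x] coef unfolding phi_neg_Phi n ..
  qed
  show "let Pf = (\<lambda>x. qscale (- sqrt (real (2 * n + 1) / (real (2 * n - 1) * real (n - l) * real (n + l + 1))))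
                                  (phi_neg (n - 1) l x))
             in monogenic_on (UNIV - {0}) Pf \<and> (\<forall>x::pt. x \<noteq> 0 \<longrightarrow> hderiv Pf x = phi_neg n l x)"
    unfolding Let_def c_def[symmetric] using mono hd by blast
qed


end
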